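(* Let $q$ be a prime power and $m\ge2$ an integer, and set $n'=\lceil\frac{q^{m-1}}{q-1}\rceil$. Let $\mathbf{C}'$ be the code obtained from the $q$-ary simplex $[\frac{q^m-1}{q-1},m,q^{m-1}]_q$ code by the extension construction. Then $\mathbf{C}'$ is a minimal linear $[\frac{q^m-1}{q-1}+n',\ m,\ q^{m-1}]_q$ code violating the Ashikhmin–Barg condition, with weight distribution: one codeword of weight $0$, $q^{m-1}-1$ codewords of weight $q^{m-1}$, and $(q-1)q^{m-1}$ codewords of weight $q^{m-1}+n'$.
   Context: The $q$-ary simplex code of dimension $m$ is generated by an $m\times\frac{q^m-1}{q-1}$ matrix whose columns are representatives of all one-dimensional subspaces of $\mathbf{F}_q^m$; all its nonzero codewords have weight $q^{m-1}$. Extension construction for a $q$-ary $[N,K]$ code $\mathbf{D}$ with $K\ge2$, minimum nonzero weight $w_{min}$, maximum weight $w_{max}$ and $n'=\lceil\frac{qw_{min}}{q-1}\rceil-w_{max}\ge1$: choose a basis $\mathbf{r}_1,\dots,\mathbf{r}_K$ with $wt(\mathbf{r}_1)=w_{max}$, $wt(\mathbf{r}_2)=w_{min}$ and $\mathbf{a}\in(\mathbf{F}_q^* )^{n'}$; the extended code is generated by $(\mathbf{a},\mathbf{r}_1),(\mathbf{0},\mathbf{r}_2),\dots,(\mathbf{0},\mathbf{r}_K)$ in $\mathbf{F}_q^{n'+N}$. Minimal code: any nonzero codewords $\mathbf{c},\mathbf{c}'$ with $supp(\mathbf{c}')\subseteq supp(\mathbf{c})$ satisfy $\mathbf{c}'=\lambda\mathbf{c}$,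 $\lambda\in\mathbf{F}_q^*$. Ashikhmin–Barg condition: $w_{min}/w_{max}>(q-1)/q$. *)

theory Defs
  imports Complex_Main "HOL-Library.Cardinality"
begin

text \<open>Vectors in F_q^N are lists of length N over a finite field 'a; q = CARD('a).\<close>

definition smul :: "'a::field \<Rightarrow> 'a list \<Rightarrow> 'a list" where
  "smul c v = map (\<lambda>x. c * x) v"

definition wt :: "'a::zero list \<Rightarrow> nat" where
  "wt v = length (filter (\<lambda>x. x \<noteq> 0) v)"

definition supp :: "'a::zero list \<Rightarrow> nat set" where
  "supp v = {i. i < length v \<and> v ! i \<noteq> 0}"

definition lincomb :: "nat \<Rightarrow> 'a::field list \<Rightarrow> 'a list list \<Rightarrow> 'a list" where
  "lincomb N cs vs = map (\<lambda>j. \<Sum>i<length vs. cs ! i * (vs ! i) ! j) [0..<N]"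

definition lspan :: "nat \<Rightarrow> 'a::field list list \<Rightarrow> 'a list set" where
  "lspan N vs = {lincomb N cs vs | cs. length cs = length vs}"

definition lin_indep :: "nat \<Rightarrow> 'a::field list list \<Rightarrow> bool" where
  "lin_indep N vs \<longleftrightarrow> (\<forall>cs. length cs = length vs \<and> lincomb N cs vs = replicate N 0
       \<longrightarrow> (\<forall>c\<in>set cs. c = 0))"

definition is_basis :: "nat \<Rightarrow> 'a::field list list \<Rightarrow> 'a list set \<Rightarrow> bool" where
  "is_basis N vs D \<longleftrightarrow> (\<forall>v\<in>set vs. length v = N) \<and> lin_indep N vs \<and> lspan N vs = D"

definition wmin :: "'a::zero list set \<Rightarrow> nat" where
  "wmin C = Min {wt c | c. c \<in> C \<and> c \<noteq> replicate (length c) 0}"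

definition wmax :: "'a::zero list set \<Rightarrow> nat" where
  "wmax C = Max {wt c | c. c \<in> C}"

definition linear_code :: "nat \<Rightarrow> nat \<Rightarrow> nat \<Rightarrow> 'a::field list set \<Rightarrow> bool" where
  "linear_code n k d C \<longleftrightarrow> (\<exists>vs. length vs = k \<and> is_basis n vs C) \<and> wmin C = d"

definition minimal_code :: "'a::field list set \<Rightarrow> bool" where
  "minimal_code C \<longleftrightarrow> (\<forall>c\<in>C. \<forall>c'\<in>C. c \<noteq> replicate (length c) 0 \<and> c' \<noteq> replicate (length c') 0
      \<and> supp c' \<subseteq> supp c \<longrightarrow> (\<exists>l. l \<noteq> 0 \<and> c' = smul l c))"

definition AB_condition :: "'a::{finite,field} list set \<Rightarrow> bool" where
  "AB_condition C \<longleftrightarrow> real (wmin C) / real (wmax C) > (real CARD('a) - 1) / real CARD('a)"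

text \<open>Columns cols (each in F_q^m) are representatives of all one-dimensional subspaces of F_q^m.\<close>
definition simplex_columns :: "nat \<Rightarrow> 'a::{finite,field} list list \<Rightarrow> bool" where
  "simplex_columns m cols \<longleftrightarrow>
     (\<forall>c\<in>set cols. length c = m \<and> c \<noteq> replicate m 0) \<and>
     (\<forall>i<length cols. \<forall>j<length cols. i \<noteq> j \<longrightarrow> (\<forall>l. cols ! i \<noteq> smul l (cols ! j))) \<and>
     (\<forall>v. length v = m \<and> v \<noteq> replicate m 0 \<longrightarrow> (\<exists>c\<in>set cols. \<exists>l. v = smul l c))"

text \<open>The code generated by the m x N matrix with columns cols (row space).\<close>
definition gen_code :: "nat \<Rightarrow> 'a::field list list \<Rightarrow> 'a list set" where
  "gen_code m cols = lspan (length cols) (map (\<lambda>i. map (\<lambda>c. c ! i) cols) [0..<m])"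

definition ext_len :: "'a::{finite,field} list set \<Rightarrow> int" where
  "ext_len (D :: 'a list set) =
     \<lceil>real CARD('a) * real (wmin D) / (real CARD('a) - 1)\<rceil> - int (wmax D)"

definition is_extension :: "nat \<Rightarrow> 'a::{finite,field} list set \<Rightarrow> 'a list set \<Rightarrow> bool" where
  "is_extension N D C' \<longleftrightarrow>
     (\<exists>rs a. length rs \<ge> 2 \<and> is_basis N rs D \<and>
        wt (rs ! 0) = wmax D \<and> wt (rs ! 1) = wmin D \<and>
        ext_len D \<ge> 1 \<and> length a = nat (ext_len D) \<and> (\<forall>x\<in>set a. x \<noteq> 0) \<and>
        C' = lspan (length a + N)
               ((a @ rs ! 0) # map (\<lambda>r. replicate (length a) 0 @ r) (tl rs)))"

end

theory Submission
  imports Defs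
begin


lemma card_field_ge2: "CARD('a::{finite,field}) \<ge> 2"
proof -
  have "{0::'a, 1} \<subseteq> UNIV" by simp
  hence "card {0::'a,1} \<le> CARD('a)" using card_mono[of "UNIV::'a set" "{0,1}"] by simp
  thus ?thesis by simp
qed

lemma card_lists_univ: "card {xs::'a::finite list. length xs = n} = CARD('a) ^ n"
  using card_lists_length_eq[of "UNIV::'a set" n] by simp

lemma finite_lists_univ: "finite {xs::'a::finite list. length xs = n}"
  using finite_lists_length_eq[of "UNIV::'a set" n] by simp

lemma wt_card: "wt v = card (supp v)"
  unfolding wt_def supp_def by (simp add: length_filter_conv_card)

lemma wt_zero_iff: "wt v = 0 \<longleftrightarrow> v = replicate (length v) 0"
proof -
  have "wt v = 0 \<longleftrightarrow> (\<forall>x\<in>set v. x = 0)" unfolding wt_def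
    by (simp add: filter_empty_conv)
  also have "\<dots> \<longleftrightarrow> v = replicate (length v) 0"
    by (metis in_set_replicate replicate_length_same)
  finally show ?thesis .
qed

lemma wt_append: "wt (xs @ ys) = wt xs + wt ys"
  unfolding wt_def by simp

lemma eq_replicate_iff: "v = replicate n x \<longleftrightarrow> length v = n \<and> (\<forall>i<n. v ! i = x)"
  by (auto simp: list_eq_iff_nth_eq)

definition ip :: "nat \<Rightarrow> 'a::field list \<Rightarrow> 'a list \<Rightarrow> 'a" where
  "ip m u v = (\<Sum>i<m. u ! i * v ! i)"

definition cw :: "nat \<Rightarrow> 'a::field list list \<Rightarrow> 'a list \<Rightarrow> 'a list" where
  "cw m cols u = map (\<lambda>c. ip m u c) cols"

lemma ip_map_right: "ip m u (map f [0..<m]) = (\<Sum>i<m. u ! i * f i)"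
  unfolding ip_def by (intro sum.cong) auto

lemma ip_map_left: "ip m (map f [0..<m]) v = (\<Sum>i<m. f i * v ! i)"
  unfolding ip_def by (intro sum.cong) auto

lemma ip_smul: "length c = m \<Longrightarrow> ip m u (smul l c) = l * ip m u c"
  unfolding ip_def smul_def by (simp add: sum_distrib_left algebra_simps)

lemma ip_zero_right: "ip m u (replicate m 0) = 0"
  unfolding ip_def by simp

lemma smul_nth: "i < length c \<Longrightarrow> smul l c ! i = l * c ! i"
  unfolding smul_def by simp

lemma length_smul[simp]: "length (smul l c) = length c"
  unfolding smul_def by simp

lemma gen_code_eq:
  "gen_code m cols = cw m cols ` {u. length u = m}"
proof -
  have "lincomb (length cols) u (map (\<lambda>i. map (\<lambda>c. c ! i) cols) [0..<m]) = cw m cols u" for u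
  proof (rule nth_equalityI)
    fix j assume "j < length (lincomb (length cols) u (map (\<lambda>i. map (\<lambda>c. c ! i) cols) [0..<m]))"
    hence j: "j < length cols" by (simp add: lincomb_def)
    thus "lincomb (length cols) u (map (\<lambda>i. map (\<lambda>c. c ! i) cols) [0..<m]) ! j = cw m cols u ! j"
      unfolding lincomb_def cw_def ip_def by (auto intro!: sum.cong)
  qed (simp add: lincomb_def cw_def)
  thus ?thesis unfolding gen_code_def lspan_def by auto
qed




lemma hyperplane_card:
  fixes u :: "'a::{finite,field} list"
  assumes lu: "length u = m" and nz: "u \<noteq> replicate m 0"
  shows "card {v. length v = m \<and> ip m u v = 0} * CARD('a) = CARD('a) ^ m"
proof -
  obtain k where k: "k < m" "u ! k \<noteq> 0" using nz lu by (auto simp: eq_replicate_iff)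
  define w :: "'a list" where "w = map (\<lambda>i. if i = k then inverse (u ! k) else 0) [0..<m]"
  have lw: "length w = m" by (simp add: w_def)
  have ipw: "ip m u w = 1"
    unfolding w_def ip_map_right using k by (simp add: if_distrib cong: if_cong)
  define K where "K = {v::'a list. length v = m \<and> ip m u v = 0}"
  define g where "g = (\<lambda>(t::'a, y::'a list). map (\<lambda>i. y ! i + t * w ! i) [0..<m])"
  have ipg: "ip m u (g (t, y)) = ip m u y + t * ip m u w" for t y
    unfolding g_def ip_map_right ip_def by (simp add: algebra_simps sum.distrib sum_distrib_left)
  have inj: "inj_on g (UNIV \<times> K)"
  proof (rule inj_onI)
    fix p p' assume p: "p \<in> UNIV \<times> K" and p': "p' \<in> UNIV \<times> K" and e: "g p = g p'"
    obtain t y where [simp]: "p = (t, y)" by (cases p)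
    obtain t' y' where [simp]: "p' = (t', y')" by (cases p')
    have yK: "y \<in> K" "y' \<in> K" using p p' by auto
    have "t = t'" using ipg[of t y] ipg[of t' y'] e yK ipw by (simp add: K_def)
    moreover have "y = y'"
    proof (rule nth_equalityI)
      show "length y = length y'" using yK by (simp add: K_def)
      fix i assume "i < length y"
      hence "i < m" using yK by (simp add: K_def)
      hence "g (t, y) ! i = g (t', y') ! i" using e by simp
      thus "y ! i = y' ! i" using \<open>i < m\<close> \<open>t = t'\<close> by (simp add: g_def)
    qed
    ultimately show "p = p'" by simp
  qed
  have img: "g ` (UNIV \<times> K) = {v. length v = m}"
  proof
    show "g ` (UNIV \<times> K) \<subseteq> {v. length v = m}" by (auto simp: g_def)
    show "{v. length v = m} \<subseteq> g ` (UNIV \<times> K)"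
    proof
      fix v :: "'a list" assume "v \<in> {v. length v = m}"
      hence lv: "length v = m" by simp
      define y where "y = map (\<lambda>i. v ! i - ip m u v * w ! i) [0..<m]"
      have "ip m u y = ip m u v - ip m u v * ip m u w"
        unfolding y_def ip_map_right ip_def by (simp add: algebra_simps sum_subtractf sum_distrib_left)
      hence "y \<in> K" using ipw by (simp add: K_def y_def)
      moreover have "g (ip m u v, y) = v" using lv
        by (auto simp: g_def y_def intro!: nth_equalityI)
      ultimately show "v \<in> g ` (UNIV \<times> K)" by (metis UNIV_I mem_Sigma_iff rev_image_eqI)
    qed
  qed
  have "card {v::'a list. length v = m} = card ((UNIV::'a set) \<times> K)"
    using card_image[OF inj] img by simp
  also have "\<dots> = CARD('a) * card K" by (simp add: card_cartesian_product)
  finally show ?thesis using card_lists_univ[of m, where 'a='a] by (simp add: K_def mult.commute)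
qed




lemma nonzero_entry: "c \<noteq> replicate (length c) 0 \<Longrightarrow> \<exists>i<length c. c ! i \<noteq> 0"
  by (auto simp: eq_replicate_iff)

lemma phi_bij:
  fixes cols :: "'a::{finite,field} list list"
  assumes sc: "simplex_columns m cols"
  shows "bij_betw (\<lambda>(j,l). smul l (cols ! j)) ({..<length cols} \<times> (UNIV - {0}))
           {v. length v = m \<and> v \<noteq> replicate m 0}"
proof -
  have c1: "\<And>c. c \<in> set cols \<Longrightarrow> length c = m \<and> c \<noteq> replicate m 0"
   and c2: "\<And>i j l. i < length cols \<Longrightarrow> j < length cols \<Longrightarrow> i \<noteq> j \<Longrightarrow> cols ! i \<noteq> smul l (cols ! j)"
   and c3: "\<And>v. length v = m \<Longrightarrow> v \<noteq> replicate m 0 \<Longrightarrow> \<exists>c\<in>set cols. \<exists>l. v = smul l c"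
    using sc unfolding simplex_columns_def by blast+
  show ?thesis
  proof (rule bij_betwI')
    fix p p' assume p: "p \<in> {..<length cols} \<times> (UNIV - {0::'a})" and p': "p' \<in> {..<length cols} \<times> (UNIV - {0::'a})"
    obtain j l where [simp]: "p = (j, l)" by (cases p)
    obtain j' l' where [simp]: "p' = (j', l')" by (cases p')
    have j: "j < length cols" "l \<noteq> 0" and j': "j' < length cols" "l' \<noteq> 0" using p p' by auto
    have cj: "length (cols ! j) = m" "cols ! j \<noteq> replicate m 0" using c1 j(1) by auto
    have cj': "length (cols ! j') = m" using c1 j'(1) by auto
    show "((\<lambda>(j,l). smul l (cols ! j)) p = (\<lambda>(j,l). smul l (cols ! j)) p') = (p = p')"
    proof
      assume e: "(\<lambda>(j,l). smul l (cols ! j)) p = (\<lambda>(j,l). smul l (cols ! j)) p'"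
      hence e': "smul l (cols ! j) = smul l' (cols ! j')" by simp
      have jj: "j = j'"
      proof (rule ccontr)
        assume "j \<noteq> j'"
        have "cols ! j = smul (l' / l) (cols ! j')"
        proof (rule nth_equalityI)
          show "length (cols ! j) = length (smul (l' / l) (cols ! j'))" using cj cj' by simp
          fix i assume "i < length (cols ! j)"
          hence i: "i < m" using cj by simp
          have "smul l (cols ! j) ! i = smul l' (cols ! j') ! i" using e' by simp
          hence "l * cols ! j ! i = l' * cols ! j' ! i" using i cj cj' by (simp add: smul_nth)
          thus "cols ! j ! i = smul (l' / l) (cols ! j') ! i" using i cj' j(2)
            by (simp add: smul_nth field_simps)
        qed
        thus False using c2[OF j(1) j'(1) \<open>j \<noteq> j'\<close>] by blast
      qed
      obtain i where i: "i < m" "cols ! j ! i \<noteq> 0" using nonzero_entry[of "cols ! j"] cj by auto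
      have "smul l (cols ! j) ! i = smul l' (cols ! j) ! i" using e' jj by simp
      hence "l * cols ! j ! i = l' * cols ! j ! i" using i cj by (simp add: smul_nth)
      hence "l = l'" using i(2) by simp
      thus "p = p'" using jj by simp
    qed simp
  next
    fix p assume p: "p \<in> {..<length cols} \<times> (UNIV - {0::'a})"
    obtain j l where [simp]: "p = (j, l)" by (cases p)
    have j: "j < length cols" "l \<noteq> 0" using p by auto
    have cj: "length (cols ! j) = m" "cols ! j \<noteq> replicate m 0" using c1 j(1) by auto
    obtain i where i: "i < m" "cols ! j ! i \<noteq> 0" using nonzero_entry[of "cols ! j"] cj by auto
    have "smul l (cols ! j) ! i \<noteq> 0" using i j cj by (simp add: smul_nth)
    hence "smul l (cols ! j) \<noteq> replicate m 0" using i by auto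
    thus "(\<lambda>(j,l). smul l (cols ! j)) p \<in> {v. length v = m \<and> v \<noteq> replicate m 0}" using cj by simp
  next
    fix v assume "v \<in> {v::'a list. length v = m \<and> v \<noteq> replicate m 0}"
    hence v: "length v = m" "v \<noteq> replicate m 0" by auto
    obtain c l where c: "c \<in> set cols" "v = smul l c" using c3[OF v] by blast
    obtain j where j: "j < length cols" "c = cols ! j" using c(1) by (auto simp: in_set_conv_nth)
    have "l \<noteq> 0"
    proof
      assume "l = 0"
      hence "v = replicate (length c) 0" using c(2) by (simp add: smul_def map_replicate_const)
      thus False using v c1[OF c(1)] by simp
    qed
    thus "\<exists>p\<in>{..<length cols} \<times> (UNIV - {0}). v = (\<lambda>(j,l). smul l (cols ! j)) p"
      using j c by auto
  qed
qed

lemma card_nonzero_vecs: "card {v::'a::{finite,field} list. length v = m \<and> v \<noteq> replicate m 0} = CARD('a) ^ m - 1"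
proof -
  have "{v::'a list. length v = m \<and> v \<noteq> replicate m 0} = {v. length v = m} - {replicate m 0}" by auto
  thus ?thesis using card_lists_univ[of m, where 'a='a] finite_lists_univ[of m, where 'a='a]
    by (simp add: card_Diff_singleton)
qed

lemma simplex_length:
  fixes cols :: "'a::{finite,field} list list"
  assumes sc: "simplex_columns m cols"
  shows "length cols * (CARD('a) - 1) = CARD('a) ^ m - 1"
proof -
  have "card ({..<length cols} \<times> (UNIV - {0::'a})) = CARD('a) ^ m - 1"
    using bij_betw_same_card[OF phi_bij[OF sc]] card_nonzero_vecs by metis
  thus ?thesis by (simp add: card_cartesian_product card_Diff_singleton)
qed

lemma simplex_weight:
  fixes cols :: "'a::{finite,field} list list"
  assumes sc: "simplex_columns m cols" and lu: "length u = m" and nz: "u \<noteq> replicate m 0"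
  shows "wt (cw m cols u) = CARD('a) ^ (m - 1)"
proof -
  define \<phi> where "\<phi> = (\<lambda>(j,l). smul l (cols ! j))"
  have bij: "bij_betw \<phi> ({..<length cols} \<times> (UNIV - {0::'a})) {v. length v = m \<and> v \<noteq> replicate m 0}"
    using phi_bij[OF sc] by (simp add: \<phi>_def)
  define A where "A = {j. j < length cols \<and> ip m u (cols ! j) \<noteq> 0}"
  have c1: "\<And>c. c \<in> set cols \<Longrightarrow> length c = m"
    using sc unfolding simplex_columns_def by blast
  have wA: "wt (cw m cols u) = card A"
    unfolding wt_card supp_def A_def cw_def by (intro arg_cong[where f=card]) auto
  have AS: "A \<times> (UNIV - {0}) \<subseteq> {..<length cols} \<times> (UNIV - {0::'a})" by (auto simp: A_def)
  have "\<phi> ` (A \<times> (UNIV - {0})) = {v. length v = m \<and> v \<noteq> replicate m 0 \<and> ip m u v \<noteq> 0}"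
  proof -
    have "\<phi> ` (A \<times> (UNIV - {0})) = {v \<in> \<phi> ` ({..<length cols} \<times> (UNIV - {0::'a})). ip m u v \<noteq> 0}"
    proof (intro equalityI subsetI)
      fix v assume "v \<in> \<phi> ` (A \<times> (UNIV - {0}))"
      then obtain j l where "j \<in> A" "l \<noteq> 0" "v = smul l (cols ! j)" by (auto simp: \<phi>_def)
      moreover have "length (cols ! j) = m" using c1 \<open>j \<in> A\<close> by (auto simp: A_def)
      ultimately show "v \<in> {v \<in> \<phi> ` ({..<length cols} \<times> (UNIV - {0::'a})). ip m u v \<noteq> 0}"
        using AS by (auto simp: ip_smul A_def \<phi>_def)
    next
      fix v assume "v \<in> {v \<in> \<phi> ` ({..<length cols} \<times> (UNIV - {0::'a})). ip m u v \<noteq> 0}"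
      then obtain j l where "j < length cols" "l \<noteq> 0" "v = smul l (cols ! j)" "ip m u v \<noteq> 0"
        by (auto simp: \<phi>_def)
      moreover have "length (cols ! j) = m" using c1 \<open>j < length cols\<close> by auto
      ultimately show "v \<in> \<phi> ` (A \<times> (UNIV - {0}))"
        by (auto simp: ip_smul A_def \<phi>_def)
    qed
    also have "\<dots> = {v. length v = m \<and> v \<noteq> replicate m 0 \<and> ip m u v \<noteq> 0}"
      using bij_betw_imp_surj_on[OF bij] by auto
    finally show ?thesis .
  qed
  also have "\<dots> = {v. length v = m \<and> ip m u v \<noteq> 0}" using ip_zero_right[of m u] by auto
  finally have img: "\<phi> ` (A \<times> (UNIV - {0})) = {v. length v = m \<and> ip m u v \<noteq> 0}" .
  have "card (A \<times> (UNIV - {0::'a})) = card {v. length v = m \<and> ip m u v \<noteq> 0}"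
    using card_image[OF inj_on_subset[OF bij_betw_imp_inj_on[OF bij] AS]] img by simp
  hence e1: "card A * (CARD('a) - 1) = card {v::'a list. length v = m \<and> ip m u v \<noteq> 0}"
    by (simp add: card_cartesian_product card_Diff_singleton)
  have "{v::'a list. length v = m \<and> ip m u v \<noteq> 0} = {v. length v = m} - {v. length v = m \<and> ip m u v = 0}"
    by auto
  hence "card {v::'a list. length v = m \<and> ip m u v \<noteq> 0} = CARD('a) ^ m - card {v. length v = m \<and> ip m u v = 0}"
    using card_lists_univ[of m, where 'a='a] finite_lists_univ[of m, where 'a='a]
      card_Diff_subset[of "{v::'a list. length v = m \<and> ip m u v = 0}" "{v. length v = m}"]
    by (metis (no_types, lifting) Collect_mono rev_finite_subset)
  moreover have hc: "card {v::'a list. length v = m \<and> ip m u v = 0} * CARD('a) = CARD('a) ^ m"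
    using hyperplane_card[OF lu nz] .
  have m1: "m \<ge> 1" using lu nz by (cases m) auto
  have q2: "CARD('a) \<ge> 2" by (rule card_field_ge2)
  have "CARD('a) ^ m = CARD('a) * CARD('a) ^ (m - 1)" using m1 by (cases m) auto
  hence "card {v::'a list. length v = m \<and> ip m u v = 0} = CARD('a) ^ (m - 1)"
    using hc q2 by (metis mult.commute mult_left_cancel not_numeral_le_zero zero_le)
  ultimately have "card A * (CARD('a) - 1) = CARD('a) ^ m - CARD('a) ^ (m - 1)" using e1 by simp
  also have "\<dots> = CARD('a) ^ (m - 1) * (CARD('a) - 1)"
    using \<open>CARD('a) ^ m = CARD('a) * CARD('a) ^ (m - 1)\<close> by (simp add: algebra_simps diff_mult_distrib)
  finally have "card A = CARD('a) ^ (m - 1)" using q2 by simp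
  thus ?thesis using wA by simp
qed




lemma length_lincomb[simp]: "length (lincomb N cs vs) = N"
  by (simp add: lincomb_def)

lemma lincomb_nth: "j < N \<Longrightarrow> lincomb N cs vs ! j = (\<Sum>i<length vs. cs ! i * vs ! i ! j)"
  by (simp add: lincomb_def)

lemma lincomb_inj:
  assumes li: "lin_indep N vs" and l: "length cs = length vs" "length cs' = length vs"
    and e: "lincomb N cs vs = lincomb N cs' vs"
  shows "cs = cs'"
proof -
  define d where "d = map (\<lambda>i. cs ! i - cs' ! i) [0..<length vs]"
  have "lincomb N d vs = replicate N 0"
  proof (rule nth_equalityI)
    fix j assume "j < length (lincomb N d vs)"
    hence j: "j < N" by simp
    have "lincomb N d vs ! j = (\<Sum>i<length vs. (cs ! i - cs' ! i) * vs ! i ! j)"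
      using j by (simp add: lincomb_nth d_def)
    also have "\<dots> = lincomb N cs vs ! j - lincomb N cs' vs ! j"
      using j by (simp add: lincomb_nth algebra_simps sum_subtractf)
    finally show "lincomb N d vs ! j = replicate N 0 ! j" using e j by simp
  qed simp
  hence "\<forall>c\<in>set d. c = 0" using li unfolding lin_indep_def by (metis d_def length_map length_upt minus_nat.diff_0)
  hence "\<forall>i<length vs. cs ! i = cs' ! i" by (auto simp: d_def)
  thus ?thesis using l by (simp add: list_eq_iff_nth_eq)
qed

lemma lincomb_smul: "length cs = length vs \<Longrightarrow> lincomb N (smul l cs) vs = smul l (lincomb N cs vs)"
  by (auto simp: list_eq_iff_nth_eq lincomb_nth smul_nth sum_distrib_left algebra_simps)

lemma lincomb_replicate0: "lincomb N (replicate (length vs) 0) vs = replicate N 0"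
  by (auto simp: list_eq_iff_nth_eq lincomb_nth)

lemma lincomb_zero_iff:
  assumes li: "lin_indep N vs" and l: "length cs = length vs"
  shows "lincomb N cs vs = replicate N 0 \<longleftrightarrow> cs = replicate (length vs) 0"
  using lincomb_inj[OF li l, of "replicate (length vs) 0"] lincomb_replicate0[of N vs] by auto

lemma lspan_image: "lspan N vs = (\<lambda>cs. lincomb N cs vs) ` {cs. length cs = length vs}"
  unfolding lspan_def by auto

lemma card_lspan:
  fixes vs :: "'a::{finite,field} list list"
  assumes li: "lin_indep N vs"
  shows "card (lspan N vs) = CARD('a) ^ length vs"
proof -
  have "inj_on (\<lambda>cs. lincomb N cs vs) {cs. length cs = length vs}"
    by (rule inj_onI) (use lincomb_inj[OF li] in auto)
  thus ?thesis unfolding lspan_image by (simp add: card_image card_lists_univ)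
qed

lemma lincomb_ext:
  fixes a :: "'a::field list"
  assumes rs: "rs \<noteq> []" "\<forall>r\<in>set rs. length r = N" and l: "length cs = length rs"
  shows "lincomb (length a + N) cs ((a @ rs ! 0) # map (\<lambda>r. replicate (length a) 0 @ r) (tl rs))
        = map (\<lambda>x. cs ! 0 * x) a @ lincomb N cs rs"
proof -
  let ?G = "(a @ rs ! 0) # map (\<lambda>r. replicate (length a) 0 @ r) (tl rs)"
  have lG: "length ?G = length rs" using rs by (cases rs) auto
  have G0: "?G ! 0 = a @ rs ! 0" by simp
  have Gi: "?G ! i = replicate (length a) 0 @ rs ! i" if "0 < i" "i < length rs" for i
    using that rs by (cases rs; cases i) auto
  have r0: "length (rs ! 0) = N" using rs by (cases rs) auto
  show ?thesis
  proof (rule nth_equalityI)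
    show "length (lincomb (length a + N) cs ?G) = length (map (\<lambda>x. cs ! 0 * x) a @ lincomb N cs rs)"
      by simp
    fix j assume "j < length (lincomb (length a + N) cs ?G)"
    hence j: "j < length a + N" by simp
    have e: "lincomb (length a + N) cs ?G ! j = (\<Sum>i<length rs. cs ! i * ?G ! i ! j)"
      using j lG by (simp add: lincomb_nth)
    show "lincomb (length a + N) cs ?G ! j = (map (\<lambda>x. cs ! 0 * x) a @ lincomb N cs rs) ! j"
    proof (cases "j < length a")
      case True
      have "(\<Sum>i<length rs. cs ! i * ?G ! i ! j) = (\<Sum>i<length rs. if i = 0 then cs ! 0 * a ! j else 0)"
      proof (intro sum.cong refl)
        fix i assume "i \<in> {..<length rs}"
        thus "cs ! i * ?G ! i ! j = (if i = 0 then cs ! 0 * a ! j else 0)"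
          using True Gi[of i] by (cases "i = 0") (auto simp: nth_append)
      qed
      also have "\<dots> = cs ! 0 * a ! j" using rs by simp
      finally show ?thesis using e True by (simp add: nth_append)
    next
      case False
      have "(\<Sum>i<length rs. cs ! i * ?G ! i ! j) = (\<Sum>i<length rs. cs ! i * rs ! i ! (j - length a))"
      proof (intro sum.cong refl)
        fix i assume "i \<in> {..<length rs}"
        thus "cs ! i * ?G ! i ! j = cs ! i * rs ! i ! (j - length a)"
          using False Gi[of i] by (cases "i = 0") (auto simp: nth_append)
      qed
      thus ?thesis using e False j by (simp add: nth_append lincomb_nth)
    qed
  qed
qed




lemma card_lists_head:
  "card {cs::'a::finite list. length cs = Suc k \<and> cs ! 0 \<in> S} = card S * CARD('a) ^ k"
proof -
  have "{cs::'a list. length cs = Suc k \<and> cs ! 0 \<in> S} = (\<lambda>(x, ys). x # ys) ` (S \<times> {ys. length ys = k})"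
  proof (intro equalityI subsetI)
    fix cs :: "'a list" assume "cs \<in> {cs. length cs = Suc k \<and> cs ! 0 \<in> S}"
    thus "cs \<in> (\<lambda>(x, ys). x # ys) ` (S \<times> {ys. length ys = k})"
      by (cases cs) force+
  qed auto
  moreover have "inj_on (\<lambda>(x, ys). x # ys) (S \<times> {ys::'a list. length ys = k})"
    by (auto simp: inj_on_def)
  ultimately show ?thesis
    by (simp add: card_image card_cartesian_product card_lists_univ)
qed

lemma cw_lincomb: "lincomb (length cols) u (map (\<lambda>i. map (\<lambda>c. c ! i) cols) [0..<m]) = cw m cols u"
proof (rule nth_equalityI)
  fix j assume "j < length (lincomb (length cols) u (map (\<lambda>i. map (\<lambda>c. c ! i) cols) [0..<m]))"
  hence j: "j < length cols" by (simp add: lincomb_def)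
  thus "lincomb (length cols) u (map (\<lambda>i. map (\<lambda>c. c ! i) cols) [0..<m]) ! j = cw m cols u ! j"
    unfolding lincomb_def cw_def ip_def by (auto intro!: sum.cong)
qed (simp add: lincomb_def cw_def)

lemma cw_zero: "cw m cols (replicate m 0) = replicate (length cols) 0"
  unfolding cw_def ip_def by (simp add: map_replicate_const)

lemma sc_D_wt:
  fixes cols :: "'a::{finite,field} list list"
  assumes sc: "simplex_columns m cols" and r: "r \<in> gen_code m cols" and nz: "r \<noteq> replicate (length cols) 0"
  shows "wt r = CARD('a) ^ (m - 1)"
proof -
  obtain u where u: "length u = m" "r = cw m cols u" using r gen_code_eq by blast
  have "u \<noteq> replicate m 0" using nz u cw_zero by metis
  thus ?thesis using simplex_weight[OF sc u(1)] u by simp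
qed

lemma sc_D_len: "r \<in> gen_code m cols \<Longrightarrow> length r = length cols"
  unfolding gen_code_eq by (auto simp: cw_def)

lemma sc_D_card:
  fixes cols :: "'a::{finite,field} list list"
  assumes sc: "simplex_columns m cols" and m: "m \<ge> 1"
  shows "card (gen_code m cols) = CARD('a) ^ m"
proof -
  let ?G = "map (\<lambda>i. map (\<lambda>c. c ! i) cols) [0..<m]"
  have Qp: "CARD('a) ^ (m - 1) > 0" by simp
  have "lin_indep (length cols) ?G"
    unfolding lin_indep_def
  proof (intro allI impI)
    fix cs :: "'a list" assume a: "length cs = length ?G \<and> lincomb (length cols) cs ?G = replicate (length cols) 0"
    hence "cw m cols cs = replicate (length cols) 0" using cw_lincomb by metis
    hence "wt (cw m cols cs) = 0" by (simp add: wt_zero_iff cw_def)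
    hence "cs = replicate m 0" using simplex_weight[OF sc, of cs] a Qp by auto
    thus "\<forall>c\<in>set cs. c = 0" by simp
  qed
  thus ?thesis unfolding gen_code_def using card_lspan by fastforce
qed

lemma sc_D_min:
  fixes cols :: "'a::{finite,field} list list"
  assumes sc: "simplex_columns m cols" and r: "r \<in> gen_code m cols" and r': "r' \<in> gen_code m cols"
    and nz: "r \<noteq> replicate (length cols) 0" and nz': "r' \<noteq> replicate (length cols) 0"
    and sub: "supp r' \<subseteq> supp r"
  shows "\<exists>l. l \<noteq> 0 \<and> r' = smul l r"
proof -
  obtain u where u: "length u = m" "r = cw m cols u" using r gen_code_eq by blast
  obtain u' where u': "length u' = m" "r' = cw m cols u'" using r' gen_code_eq by blast
  have lr: "length r = length cols" "length r' = length cols" using u u' by (auto simp: cw_def)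
  obtain j where j: "j < length cols" "r' ! j \<noteq> 0" using nonzero_entry[of r'] nz' lr by auto
  have rj: "r ! j \<noteq> 0" using sub j lr by (auto simp: supp_def)
  define l where "l = r' ! j / r ! j"
  define w where "w = map (\<lambda>i. u' ! i - l * u ! i) [0..<m]"
  define d where "d = cw m cols w"
  have dD: "d \<in> gen_code m cols" using gen_code_eq d_def w_def by fastforce
  have dn: "d ! i = r' ! i - l * r ! i" if "i < length cols" for i
    using that unfolding d_def w_def u u' cw_def
    by (simp add: ip_map_left ip_def sum_subtractf sum_distrib_left algebra_simps)
  have ld: "length d = length cols" by (simp add: d_def cw_def)
  have "supp d \<subseteq> supp r - {j}"
  proof
    fix i assume "i \<in> supp d"
    hence i: "i < length cols" "d ! i \<noteq> 0" by (auto simp: supp_def ld)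
    have "i \<in> supp r"
    proof (rule ccontr)
      assume "i \<notin> supp r"
      hence "r ! i = 0" "r' ! i = 0" using i sub lr by (auto simp: supp_def)
      thus False using i dn by simp
    qed
    moreover have "i \<noteq> j" using i dn[of j] j rj by (auto simp: l_def)
    ultimately show "i \<in> supp r - {j}" by simp
  qed
  hence sd: "supp d \<subseteq> supp r - {j}" .
  have jr: "j \<in> supp r" using rj j lr by (simp add: supp_def)
  have fin: "finite (supp r)" by (simp add: supp_def)
  have "card (supp d) \<le> card (supp r - {j})" using sd fin by (intro card_mono) auto
  also have "\<dots> < card (supp r)" proof -
    have "card (supp r) > 0" using jr fin card_gt_0_iff[of "supp r"] by blast
    thus ?thesis using jr fin by (simp add: card_Diff_singleton)
  qed
  finally have "wt d < wt r" by (simp add: wt_card)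
  have "d = replicate (length cols) 0"
  proof (rule ccontr)
    assume "d \<noteq> replicate (length cols) 0"
    hence "wt d = wt r" using sc_D_wt[OF sc dD] sc_D_wt[OF sc r nz] by simp
    thus False using \<open>wt d < wt r\<close> by simp
  qed
  have "r' = smul l r"
  proof (rule nth_equalityI)
    show "length r' = length (smul l r)" using lr by simp
    fix i assume "i < length r'"
    hence i: "i < length cols" using lr by simp
    have "d ! i = 0" using \<open>d = replicate (length cols) 0\<close> i by simp
    thus "r' ! i = smul l r ! i" using dn[OF i] i lr by (simp add: smul_nth)
  qed
  moreover have "l \<noteq> 0" using j rj by (simp add: l_def)
  ultimately show ?thesis by blast
qed




theorem proposition6p1:
  fixes cols :: "'a::{finite,field} list list" and m :: nat and C' :: "'a list set"
  defines "q \<equiv> CARD('a)"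
  defines "n' \<equiv> nat \<lceil>real (q ^ (m - 1)) / real (q - 1)\<rceil>"
  assumes "m \<ge> 2"
    and "simplex_columns m cols"
    and "is_extension (length cols) (gen_code m cols) C'"
  shows "linear_code ((q ^ m - 1) div (q - 1) + n') m (q ^ (m - 1)) C'
    \<and> minimal_code C'
    \<and> \<not> AB_condition C'
    \<and> card {c \<in> C'. wt c = 0} = 1
    \<and> card {c \<in> C'. wt c = q ^ (m - 1)} = q ^ (m - 1) - 1
    \<and> card {c \<in> C'. wt c = q ^ (m - 1) + n'} = (q - 1) * q ^ (m - 1)"
proof -
  note sc = assms(4)
  define Q where "Q = q ^ (m - 1)"
  define N where "N = length cols"
  define D where "D = gen_code m cols"
  have q2: "q \<ge> 2" unfolding q_def by (rule card_field_ge2)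
  have m2: "m \<ge> 2" by fact
  have Qq: "Q \<ge> q" unfolding Q_def using q2 m2
    using power_increasing[of 1 "m - 1" q] by simp
  have Q2: "Q \<ge> 2" using Qq q2 by simp
  obtain rs a where ex: "length rs \<ge> 2" "is_basis N rs D" "wt (rs ! 0) = wmax D" "wt (rs ! 1) = wmin D"
      "ext_len D \<ge> 1" "length a = nat (ext_len D)" "\<forall>x\<in>set a. x \<noteq> 0"
      "C' = lspan (length a + N) ((a @ rs ! 0) # map (\<lambda>r. replicate (length a) 0 @ r) (tl rs))"
    using assms(5) unfolding is_extension_def N_def D_def by blast
  have rsl: "\<forall>r\<in>set rs. length r = N" and li: "lin_indep N rs" and span: "lspan N rs = D"
    using ex(2) unfolding is_basis_def by auto
  have Dlen: "r \<in> D \<Longrightarrow> length r = N" for r using sc_D_len by (simp add: D_def N_def)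
  have Dwt: "r \<in> D \<Longrightarrow> r \<noteq> replicate N 0 \<Longrightarrow> wt r = Q" for r
    using sc_D_wt[OF sc] by (simp add: D_def N_def Q_def q_def)
  have D0: "replicate N 0 \<in> D"
    unfolding D_def N_def gen_code_eq using cw_zero[of m cols]
    by (metis (mono_tags, lifting) image_eqI length_replicate mem_Collect_eq)
  have cardD: "card D = q ^ m" using sc_D_card[OF sc] m2 by (simp add: D_def q_def)
  obtain r1 where r1: "r1 \<in> D" "r1 \<noteq> replicate N 0"
  proof -
    have "q ^ 1 \<le> q ^ m" using power_increasing[of 1 m q] q2 m2 by simp
    hence "card D \<ge> 2" using cardD q2 by simp
    hence "D \<noteq> {replicate N 0}" by auto
    thus ?thesis using that D0 by blast
  qed
  have wminD: "wmin D = Q"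
  proof -
    have "{wt c |c. c \<in> D \<and> c \<noteq> replicate (length c) 0} = {Q}"
      using r1 Dwt Dlen by fastforce
    thus ?thesis by (simp add: wmin_def)
  qed
  have wmaxD: "wmax D = Q"
  proof -
    have "{wt c |c. c \<in> D} = {0, Q}"
    proof (intro equalityI subsetI)
      fix x assume "x \<in> {wt c |c. c \<in> D}"
      then obtain c where "c \<in> D" "x = wt c" by auto
      thus "x \<in> {0, Q}" using Dwt[of c] Dlen[of c] wt_zero_iff[of c] by (cases "c = replicate N 0") auto
    next
      fix x assume "x \<in> {0, Q}"
      thus "x \<in> {wt c |c. c \<in> D}" using D0 r1 Dwt[of r1] wt_zero_iff[of "replicate N 0"] by auto
    qed
    thus ?thesis by (simp add: wmax_def)
  qed
  have qr: "real (q - 1) = real q - 1" using q2 by simp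
  have qpos: "real q - 1 > 0" using q2 by simp
  have "real q * real Q / (real q - 1) = real Q / real (q - 1) + of_int (int Q)"
    using qpos qr by (simp add: field_simps)
  hence el: "ext_len D = \<lceil>real Q / real (q - 1)\<rceil>"
  proof -
    have "\<lceil>real Q / real (q - 1) + real Q\<rceil> = \<lceil>real Q / real (q - 1)\<rceil> + int Q"
      by (metis ceiling_add_of_int of_int_of_nat_eq)
    thus ?thesis using \<open>real q * real Q / (real q - 1) = real Q / real (q - 1) + of_int (int Q)\<close>
      unfolding ext_len_def wminD wmaxD q_def[symmetric] by simp
  qed
  have cpos: "\<lceil>real Q / real (q - 1)\<rceil> \<ge> 1" using Q2 qpos qr by simp
  have n'e: "int n' = \<lceil>real Q / real (q - 1)\<rceil>" using cpos by (simp add: n'_def Q_def)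
  have la: "length a = n'" using ex(6) el n'e by simp
  have n'1: "n' \<ge> 1" using cpos unfolding n'e[symmetric] by simp
  have n'ge: "real Q \<le> (real q - 1) * real n'"
  proof -
    have "real Q / real (q - 1) \<le> real n'" using n'e
      by (metis le_of_int_ceiling of_int_of_nat_eq)
    thus ?thesis using qpos qr by (simp add: field_simps)
  qed
  have lrs: "length rs = m"
  proof -
    have "card D = q ^ length rs" using card_lspan[OF li] span by (simp add: q_def)
    hence "q ^ length rs = q ^ m" using cardD by simp
    thus ?thesis using q2 power_inject_exp[of q] by simp
  qed
  have rsne: "rs \<noteq> []" using ex(1) by auto
  define G where "G = (a @ rs ! 0) # map (\<lambda>r. replicate (length a) 0 @ r) (tl rs)"
  have lG: "length G = m" using lrs rsne m2 by (simp add: G_def)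
  define ext where "ext = (\<lambda>cs. map (\<lambda>x. cs ! 0 * x) a @ lincomb N cs rs)"
  have lincG: "length cs = m \<Longrightarrow> lincomb (length a + N) cs G = ext cs" for cs
    unfolding G_def ext_def using lincomb_ext[OF rsne rsl, of cs a] lrs by simp
  have C'eq: "C' = ext ` {cs. length cs = m}"
    unfolding ex(8) G_def[symmetric] lspan_image lG using lincG by auto
  have inj: "inj_on ext {cs. length cs = m}"
  proof (rule inj_onI)
    fix cs cs' assume "cs \<in> {cs. length cs = m}" "cs' \<in> {cs. length cs = m}" "ext cs = ext cs'"
    thus "cs = cs'" unfolding ext_def using lincomb_inj[OF li] lrs by auto
  qed
  have lext: "length (ext cs) = length a + N" for cs by (simp add: ext_def)
  have rD: "length cs = m \<Longrightarrow> lincomb N cs rs \<in> D" for cs using span lrs by (auto simp: lspan_def)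
  have rz: "length cs = m \<Longrightarrow> lincomb N cs rs = replicate N 0 \<longleftrightarrow> cs = replicate m 0" for cs
    using lincomb_zero_iff[OF li] lrs by simp
  have wta: "wt (map (\<lambda>x. c * x) a) = (if c = 0 then 0 else n')" for c
  proof (cases "c = 0")
    case True thus ?thesis by (simp add: wt_def filter_map comp_def)
  next
    case False
    have "filter (\<lambda>x. x \<noteq> 0) (map (\<lambda>x. c * x) a) = map (\<lambda>x. c * x) a"
      using False ex(7) by (auto simp: filter_id_conv)
    thus ?thesis using False la by (simp add: wt_def)
  qed
  have wext: "length cs = m \<Longrightarrow> wt (ext cs) = (if cs ! 0 = 0 then 0 else n') + (if cs = replicate m 0 then 0 else Q)" for cs
  proof -
    assume l: "length cs = m"
    have "wt (lincomb N cs rs) = (if cs = replicate m 0 then 0 else Q)"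
      using rz[OF l] Dwt[OF rD[OF l]] wt_zero_iff[of "lincomb N cs rs"] by auto
    thus ?thesis unfolding ext_def wt_append wta by simp
  qed
  have m0: "Suc (m - 1) = m" using m2 by simp
  have cnt: "card {c \<in> C'. wt c = w} = card {cs. length cs = m \<and> wt (ext cs) = w}" for w
  proof -
    have "{c \<in> C'. wt c = w} = ext ` {cs. length cs = m \<and> wt (ext cs) = w}" unfolding C'eq by auto
    moreover have "inj_on ext {cs. length cs = m \<and> wt (ext cs) = w}"
      using inj by (rule inj_on_subset) auto
    ultimately show ?thesis by (simp add: card_image)
  qed
  have z0: "cs = replicate m 0 \<Longrightarrow> cs ! 0 = 0" for cs using m2 by simp
  have w0: "wt (ext cs) = 0 \<longleftrightarrow> cs = replicate m 0" if l: "length cs = m" for cs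
    using wext[OF l] n'1 Q2 z0[of cs] by (cases "cs ! 0 = 0"; cases "cs = replicate m 0") auto
  have wQ: "wt (ext cs) = Q \<longleftrightarrow> cs ! 0 = 0 \<and> cs \<noteq> replicate m 0" if l: "length cs = m" for cs
    using wext[OF l] n'1 Q2 z0[of cs] by (cases "cs ! 0 = 0"; cases "cs = replicate m 0") auto
  have wQn: "wt (ext cs) = Q + n' \<longleftrightarrow> cs ! 0 \<noteq> 0" if l: "length cs = m" for cs
    using wext[OF l] n'1 Q2 z0[of cs] by (cases "cs ! 0 = 0"; cases "cs = replicate m 0") auto
  have c0: "card {c \<in> C'. wt c = 0} = 1"
  proof -
    have "{cs. length cs = m \<and> wt (ext cs) = 0} = {replicate m 0}"
      using w0 by auto
    thus ?thesis using cnt by simp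
  qed
  have cQ: "card {c \<in> C'. wt c = Q} = Q - 1"
  proof -
    have "{cs. length cs = m \<and> wt (ext cs) = Q} = {cs. length cs = m \<and> cs ! 0 \<in> {0}} - {replicate m 0}"
      using wQ by blast
    moreover have "card {cs::'a list. length cs = m \<and> cs ! 0 \<in> {0}} = Q"
      using card_lists_head[of "m - 1" "{0::'a}"] unfolding m0 by (simp add: Q_def q_def)
    moreover have "replicate m 0 \<in> {cs::'a list. length cs = m \<and> cs ! 0 \<in> {0}}"
      using m2 by simp
    moreover have "finite {cs::'a list. length cs = m \<and> cs ! 0 \<in> {0}}"
      using finite_lists_univ[of m, where 'a='a] by (rule rev_finite_subset) auto
    ultimately show ?thesis using cnt by (simp add: card_Diff_singleton)
  qed
  have cQn: "card {c \<in> C'. wt c = Q + n'} = (q - 1) * Q"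
  proof -
    have "{cs. length cs = m \<and> wt (ext cs) = Q + n'} = {cs. length cs = m \<and> cs ! 0 \<in> UNIV - {0}}"
      using wQn by blast
    moreover have "card {cs::'a list. length cs = m \<and> cs ! 0 \<in> UNIV - {0}} = (q - 1) * Q"
      using card_lists_head[of "m - 1" "UNIV - {0::'a}"] unfolding m0 by (simp add: Q_def q_def card_Diff_singleton)
    ultimately show ?thesis using cnt by simp
  qed
  have allw: "c \<in> C' \<Longrightarrow> wt c = 0 \<or> wt c = Q \<or> wt c = Q + n'" for c
  proof -
    assume "c \<in> C'"
    then obtain cs where l: "length cs = m" and c: "c = ext cs" unfolding C'eq by blast
    show ?thesis unfolding c using w0[OF l] wQ[OF l] wQn[OF l] by (cases "cs ! 0 = 0") auto
  qed
  have finC: "finite C'" unfolding C'eq by (rule finite_imageI[OF finite_lists_univ])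
  have exQ: "\<exists>c\<in>C'. wt c = Q"
  proof (rule ccontr)
    assume "\<not> ?thesis" hence e: "{c \<in> C'. wt c = Q} = {}" by auto
    have "card {c \<in> C'. wt c = Q} = 0" unfolding e by simp
    thus False using cQ Q2 by linarith
  qed
  have exQn: "\<exists>c\<in>C'. wt c = Q + n'"
  proof (rule ccontr)
    assume "\<not> ?thesis" hence e: "{c \<in> C'. wt c = Q + n'} = {}" by auto
    have "card {c \<in> C'. wt c = Q + n'} = 0" unfolding e by simp
    moreover have "(q - 1) * Q > 0" using Q2 q2 by simp
    ultimately show False using cQn by linarith
  qed
  have wminC: "wmin C' = Q"
    unfolding wmin_def
  proof (rule Min_eqI)
    show "finite {wt c |c. c \<in> C' \<and> c \<noteq> replicate (length c) 0}" using finC by simp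
    fix y assume "y \<in> {wt c |c. c \<in> C' \<and> c \<noteq> replicate (length c) 0}"
    then obtain c where "c \<in> C'" "c \<noteq> replicate (length c) 0" "y = wt c" by auto
    thus "Q \<le> y" using allw[of c] wt_zero_iff[of c] by auto
  next
    show "Q \<in> {wt c |c. c \<in> C' \<and> c \<noteq> replicate (length c) 0}"
    proof -
      obtain c where c: "c \<in> C'" "wt c = Q" using exQ by blast
      hence "c \<noteq> replicate (length c) 0" using Q2 wt_zero_iff[of c] by auto
      thus ?thesis using c by blast
    qed
  qed
  have wmaxC: "wmax C' = Q + n'"
    unfolding wmax_def
  proof (rule Max_eqI)
    show "finite {wt c |c. c \<in> C'}" using finC by simp
    fix y assume "y \<in> {wt c |c. c \<in> C'}"
    then obtain c where "c \<in> C'" "y = wt c" by blast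
    thus "y \<le> Q + n'" using allw[of c] by auto
  next
    obtain c where c: "c \<in> C'" "wt c = Q + n'" using exQn by blast
    hence "Q + n' = wt c \<and> c \<in> C'" by simp
    thus "Q + n' \<in> {wt c |c. c \<in> C'}" by blast
  qed
  have Nlen: "(q ^ m - 1) div (q - 1) = N"
  proof -
    have "N * (q - 1) = q ^ m - 1" using simplex_length[OF sc] by (simp add: q_def N_def)
    moreover have "q - 1 > 0" using q2 by simp
    ultimately show ?thesis by (metis nonzero_mult_div_cancel_right less_not_refl2)
  qed
  have basis: "is_basis (length a + N) G C'"
  proof -
    have "\<forall>v\<in>set G. length v = length a + N"
      using rsl rsne by (cases rs) (auto simp: G_def dest: list.set_sel(2))
    moreover have "lin_indep (length a + N) G"
      unfolding lin_indep_def
    proof (intro allI impI)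
      fix cs :: "'a list" assume a: "length cs = length G \<and> lincomb (length a + N) cs G = replicate (length a + N) 0"
      hence l: "length cs = m" using lG by simp
      have "ext cs = replicate (length a) 0 @ replicate N 0"
        using a lincG[OF l] by (simp add: replicate_add)
      hence "lincomb N cs rs = replicate N 0" unfolding ext_def by simp
      hence "cs = replicate m 0" using rz[OF l] by simp
      thus "\<forall>c\<in>set cs. c = 0" by simp
    qed
    ultimately show ?thesis unfolding is_basis_def ex(8) G_def by simp
  qed
  have lin: "linear_code ((q ^ m - 1) div (q - 1) + n') m (q ^ (m - 1)) C'"
    unfolding linear_code_def using basis lG wminC Nlen la by (auto simp: Q_def add.commute)
  have minC: "minimal_code C'"
    unfolding minimal_code_def
  proof (intro ballI impI)
    fix c c' assume cC: "c \<in> C'" and cC': "c' \<in> C'"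
      and h: "c \<noteq> replicate (length c) 0 \<and> c' \<noteq> replicate (length c') 0 \<and> supp c' \<subseteq> supp c"
    obtain cs where cs: "length cs = m" "c = ext cs" using cC C'eq by auto
    obtain cs' where cs': "length cs' = m" "c' = ext cs'" using cC' C'eq by auto
    have "wt c \<noteq> 0" "wt c' \<noteq> 0" using h wt_zero_iff[of c] wt_zero_iff[of c'] by auto
    hence nz: "cs \<noteq> replicate m 0" "cs' \<noteq> replicate m 0"
      using w0[OF cs(1)] w0[OF cs'(1)] cs(2) cs'(2) by auto
    define r where "r = lincomb N cs rs"
    define r' where "r' = lincomb N cs' rs"
    have rnz: "r \<noteq> replicate N 0" "r' \<noteq> replicate N 0" using rz cs cs' nz by (auto simp: r_def r'_def)
    have "supp r' \<subseteq> supp r"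
    proof
      fix i assume "i \<in> supp r'"
      hence i: "i < N" "r' ! i \<noteq> 0" by (auto simp: supp_def r'_def)
      hence "length a + i \<in> supp c'" using cs' by (simp add: supp_def ext_def r'_def nth_append)
      hence "length a + i \<in> supp c" using h by auto
      hence "r ! i \<noteq> 0" using cs by (simp add: supp_def ext_def r_def nth_append)
      thus "i \<in> supp r" using i by (simp add: supp_def r_def)
    qed
    then obtain l where l: "l \<noteq> 0" "r' = smul l r"
      using sc_D_min[OF sc, of r r'] rD[OF cs(1)] rD[OF cs'(1)] rnz
      by (auto simp: r_def r'_def D_def N_def)
    have "lincomb N cs' rs = lincomb N (smul l cs) rs"
      using l lincomb_smul[of cs rs N l] cs lrs by (simp add: r_def r'_def)
    hence "cs' = smul l cs" using lincomb_inj[OF li] cs cs' lrs by simp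
    hence "c' = smul l c"
      using cs cs' m2 lincomb_smul[of cs rs N l] lrs
      by (simp add: ext_def smul_def smul_nth)
    thus "\<exists>l. l \<noteq> 0 \<and> c' = smul l c" using l by blast
  qed
  have notAB: "\<not> AB_condition C'"
  proof -
    have "real Q * real q \<le> (real q - 1) * (real Q + real n')"
      using n'ge by (simp add: algebra_simps)
    hence "real Q / (real Q + real n') \<le> (real q - 1) / real q"
      using Q2 q2 by (simp add: field_simps)
    thus ?thesis unfolding AB_condition_def wminC wmaxC q_def[symmetric] by simp
  qed
  show ?thesis using lin minC notAB c0 cQ cQn by (simp add: Q_def)
qed


end
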